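(* For all $v,w,u\in W$, \[ \pi\bullet\big(\zeta(v)_{I_w}\cdot(\delta_v\odot\zeta^\vee_{I_u})\big)=\delta^{Kr}_{w,u}\,\mathbf 1, \] i.e. $\delta_v\odot\zeta^\vee_{I_w}$ is the Poincaré dual $\zeta(v)^\vee_{I_w}$ of $\zeta(v)_{I_w}$; in particular, for each fixed $v\in W$ the classes $\{\delta_v\odot\zeta^\vee_{I_w}\}_{w\in W}$ form an $S$-basis of $Z$.
   Context: Let $\Phi$ be a finite real root system with simple roots $\Pi$, positive roots $\Phi_+$, negative roots $\Phi_-$, and finite Coxeter group $W$. Let $\mathcal O$ be its coefficient ring, $\Lambda$ a free $\mathcal O$-module between the root lattice $\Lambda_r$ (the $\mathcal O$-span of $\Pi$) and the weight lattice $\Lambda_w=\{\lambda\in\Lambda_r\otimes K:\alpha^\vee(\lambda)\in\mathcal O\ \forall\alpha\}$. Let $F$ be a one-dimensional commutative formal group law over a commutative ring $R$, and $S$ the associated formal group ring ($R[[x_\lambda]]_{\lambda\in\Lambda}$ modulo the closure of the relations $x_0=0$, $x_{\lambda+\mu}=F(x_\lambda,x_\mu)$; no completion for polynomial $F$; in the non-crystallographic case $F$ additive, $R=\mathcal O$, $S=\mathrm{Sym}_{\mathcal O}(\Lambda)$), with $W$ acting via $w(x_\lambda)=x_{w(\lambda)}$. Assume all $x_\alpha$ regular and that for distinct positive roots $\alpha,\alpha'$, $x_\alpha\mid x_{\alpha'}f\Rightarrow x_\alpha\mid f$. $Q=S[1/x_\alpha]$, $Q_W$ the twisted group algebra with basis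 $\delta_w$ and $\delta_wq=w(q)\delta_w$; $Y_\alpha=\frac1{x_{-\alpha}}+\frac1{x_\alpha}\delta_{s_\alpha}$, $Y_i=Y_{\alpha_i}$. For each $w$ fix a reduced word $I_w=(i_1,\dots,i_l)$, $Y_{I_w}=Y_{i_1}\cdots Y_{i_l}$, $I_w^{-1}$ the reversed word. The Demazure algebra $\mathbb D\subset Q_W$ is the $R$-subalgebra generated by $S$ and the $Y_i$; it is a free left $S$-module with basis $\{Y_{I_w}\}$. Structure algebra $Z=\{(z_v)_{v\in W}\in\bigoplus_vS: z_{s_\alpha w}-z_w\in x_\alpha S\ \forall w,\ \alpha\in\Phi_+\}$ (coordinatewise product). It is known that $Z$ is the image of the injective map $\mathrm{Hom}_S(\mathbb D,S)\to\bigoplus_vS$, $\phi\mapsto(\phi(\delta_v))_v$. Hecke action $q\delta_w\bullet(z_v)_v=(v(q)z_{vw})_v$; Weyl action $q\delta_w\odot(z_v)_v=(q\,w(z_{w^{-1}v}))_v$. $\mathbf 1=(1)_v$; $x_\Pi=\prod_{\alpha\in\Phi_-}x_\alpha$; $[e]$ has $e$-coordinate $x_\Pi$ and other coordinates $0$; $[v]=\delta_v\odot[e]$; $\zeta(v)_{I_w}=Y_{I_w^{-1}}\bullet[v]$, $\zeta_{I_w}=\zeta(e)_{I_w}$. $\pi=\sum_w\frac1{w(x_\Pi)}\delta_w$ acting by $\bullet$. $\zeta^\vee_{I_w}\in Z$ is the element corresponding to the $S$-linear functional on $\mathbb D$ with $Y_{I_u}\mapsto\delta^{Kr}_{w,u}$;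 it is known that $\{\zeta^\vee_{I_w}\}$ is an $S$-basis of $Z$ and $\pi\bullet(\zeta_{I_w}\cdot\zeta^\vee_{I_u})=\delta^{Kr}_{w,u}\mathbf 1$. *)

theory Defs
  imports "HOL-Analysis.Analysis" "HOL-Library.FuncSet"
begin

definition refl :: "'v::real_inner \<Rightarrow> 'v \<Rightarrow> 'v" where
  "refl \<alpha> = (\<lambda>\<mu>. \<mu> - (2 * (\<mu> \<bullet> \<alpha>) / (\<alpha> \<bullet> \<alpha>)) *\<^sub>R \<alpha>)"

definition root_system :: "'v::euclidean_space set \<Rightarrow> bool" where
  "root_system \<Phi> \<longleftrightarrow> finite \<Phi> \<and> span \<Phi> = UNIV \<and> 0 \<notin> \<Phi> \<and>
     (\<forall>\<alpha>\<in>\<Phi>. refl \<alpha> ` \<Phi> = \<Phi>) \<and>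
     (\<forall>\<alpha>\<in>\<Phi>. \<forall>c::real. c *\<^sub>R \<alpha> \<in> \<Phi> \<longleftrightarrow> c = 1 \<or> c = -1)"

definition simple_system :: "'v::euclidean_space set \<Rightarrow> 'v set \<Rightarrow> bool" where
  "simple_system \<Phi> \<Delta> \<longleftrightarrow> \<Delta> \<subseteq> \<Phi> \<and> independent \<Delta> \<and>
     (\<forall>\<alpha>\<in>\<Phi>. \<exists>c. \<alpha> = (\<Sum>\<beta>\<in>\<Delta>. c \<beta> *\<^sub>R \<beta>) \<and>
                 ((\<forall>\<beta>\<in>\<Delta>. 0 \<le> c \<beta>) \<or> (\<forall>\<beta>\<in>\<Delta>. c \<beta> \<le> 0)))"

definition pos_roots :: "'v::euclidean_space set \<Rightarrow> 'v set \<Rightarrow> 'v set" where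
  "pos_roots \<Phi> \<Delta> = {\<alpha>\<in>\<Phi>. \<exists>c. \<alpha> = (\<Sum>\<beta>\<in>\<Delta>. c \<beta> *\<^sub>R \<beta>) \<and> (\<forall>\<beta>\<in>\<Delta>. 0 \<le> c \<beta>)}"

definition neg_roots :: "'v::euclidean_space set \<Rightarrow> 'v set \<Rightarrow> 'v set" where
  "neg_roots \<Phi> \<Delta> = {\<alpha>\<in>\<Phi>. \<exists>c. \<alpha> = (\<Sum>\<beta>\<in>\<Delta>. c \<beta> *\<^sub>R \<beta>) \<and> (\<forall>\<beta>\<in>\<Delta>. c \<beta> \<le> 0)}"

definition refl_word :: "'v::real_inner list \<Rightarrow> 'v \<Rightarrow> 'v" where
  "refl_word l = foldr (\<lambda>\<alpha> f. refl \<alpha> \<circ> f) l id"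

definition weyl_group :: "'v::real_inner set \<Rightarrow> ('v \<Rightarrow> 'v) set" where
  "weyl_group \<Phi> = {refl_word l | l. set l \<subseteq> \<Phi>}"

definition reduced_word :: "'v::real_inner set \<Rightarrow> ('v \<Rightarrow> 'v) \<Rightarrow> 'v list \<Rightarrow> bool" where
  "reduced_word \<Delta> w l \<longleftrightarrow> set l \<subseteq> \<Delta> \<and> refl_word l = w \<and>
     (\<forall>l'. set l' \<subseteq> \<Delta> \<and> refl_word l' = w \<longrightarrow> length l \<le> length l')"

definition qinv :: "'q::comm_ring_1 \<Rightarrow> 'q" where
  "qinv a = (THE b. a * b = 1)"

text \<open>Elements of Q_W are coefficient functions  a : W -> Q  (a = sum_w a(w) delta_w).
  Product: (a delta_w)(b delta_u) = a w(b) delta_{wu}.\<close>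
definition qw_mult :: "('v \<Rightarrow> 'v) set \<Rightarrow> (('v \<Rightarrow> 'v) \<Rightarrow> 'q \<Rightarrow> 'q) \<Rightarrow>
    (('v \<Rightarrow> 'v) \<Rightarrow> 'q::comm_ring_1) \<Rightarrow> (('v \<Rightarrow> 'v) \<Rightarrow> 'q) \<Rightarrow> (('v \<Rightarrow> 'v) \<Rightarrow> 'q)" where
  "qw_mult W act a b = (\<lambda>y. \<Sum>w\<in>W. \<Sum>u\<in>W. if w \<circ> u = y then a w * act w (b u) else 0)"

definition qw_delta :: "('v \<Rightarrow> 'v) \<Rightarrow> (('v \<Rightarrow> 'v) \<Rightarrow> 'q::comm_ring_1)" where
  "qw_delta w = (\<lambda>y. if y = w then 1 else 0)"

definition Y_elt :: "('v::real_inner \<Rightarrow> 'q::comm_ring_1) \<Rightarrow> 'v \<Rightarrow> (('v \<Rightarrow> 'v) \<Rightarrow> 'q)" where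
  "Y_elt x \<alpha> = (\<lambda>y. if y = id then qinv (x (-\<alpha>)) else if y = refl \<alpha> then qinv (x \<alpha>) else 0)"

definition Y_word :: "('v::real_inner \<Rightarrow> 'v) set \<Rightarrow> (('v \<Rightarrow> 'v) \<Rightarrow> 'q \<Rightarrow> 'q) \<Rightarrow>
    ('v \<Rightarrow> 'q::comm_ring_1) \<Rightarrow> 'v list \<Rightarrow> (('v \<Rightarrow> 'v) \<Rightarrow> 'q)" where
  "Y_word W act x l = foldr (\<lambda>\<alpha> b. qw_mult W act (Y_elt x \<alpha>) b) l (qw_delta id)"

definition hecke :: "('v \<Rightarrow> 'v) set \<Rightarrow> (('v \<Rightarrow> 'v) \<Rightarrow> 'q \<Rightarrow> 'q) \<Rightarrow>
    (('v \<Rightarrow> 'v) \<Rightarrow> 'q::comm_ring_1) \<Rightarrow> (('v \<Rightarrow> 'v) \<Rightarrow> 'q) \<Rightarrow> (('v \<Rightarrow> 'v) \<Rightarrow> 'q)" where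
  "hecke W act a z = (\<lambda>v. if v \<in> W then (\<Sum>w\<in>W. act v (a w) * z (v \<circ> w)) else 0)"

definition weyl_act :: "('v \<Rightarrow> 'v) set \<Rightarrow> (('v \<Rightarrow> 'v) \<Rightarrow> 'q \<Rightarrow> 'q) \<Rightarrow>
    (('v \<Rightarrow> 'v) \<Rightarrow> 'q::comm_ring_1) \<Rightarrow> (('v \<Rightarrow> 'v) \<Rightarrow> 'q) \<Rightarrow> (('v \<Rightarrow> 'v) \<Rightarrow> 'q)" where
  "weyl_act W act a z = (\<lambda>v. if v \<in> W then
      (\<Sum>w\<in>W. \<Sum>u\<in>W. if w \<circ> u = v then a w * act w (z u) else 0) else 0)"

definition cw_mult :: "('w \<Rightarrow> 'q::comm_ring_1) \<Rightarrow> ('w \<Rightarrow> 'q) \<Rightarrow> ('w \<Rightarrow> 'q)" where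
  "cw_mult z z' = (\<lambda>v. z v * z' v)"

definition one_tuple :: "'w set \<Rightarrow> ('w \<Rightarrow> 'q::comm_ring_1)" where
  "one_tuple W = (\<lambda>v. if v \<in> W then 1 else 0)"

definition xPi :: "'v::euclidean_space set \<Rightarrow> 'v set \<Rightarrow> ('v \<Rightarrow> 'q::comm_ring_1) \<Rightarrow> 'q" where
  "xPi \<Phi> \<Delta> x = (\<Prod>\<alpha>\<in>neg_roots \<Phi> \<Delta>. x \<alpha>)"

text \<open>[e]: e-coordinate x_Pi, other coordinates 0.\<close>
definition pt_e :: "'q::comm_ring_1 \<Rightarrow> (('v \<Rightarrow> 'v) \<Rightarrow> 'q)" where
  "pt_e c = (\<lambda>v. if v = id then c else 0)"

definition pt :: "('v \<Rightarrow> 'v) set \<Rightarrow> (('v \<Rightarrow> 'v) \<Rightarrow> 'q \<Rightarrow> 'q) \<Rightarrow> 'q::comm_ring_1 \<Rightarrow>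
    ('v \<Rightarrow> 'v) \<Rightarrow> (('v \<Rightarrow> 'v) \<Rightarrow> 'q)" where
  "pt W act c v = weyl_act W act (qw_delta v) (pt_e c)"

text \<open>zeta(v)_{I_w} = Y_{I_w^{-1}} . [v]; here I is the chosen family of reduced words.\<close>
definition zeta :: "('v::real_inner \<Rightarrow> 'v) set \<Rightarrow> (('v \<Rightarrow> 'v) \<Rightarrow> 'q \<Rightarrow> 'q) \<Rightarrow> ('v \<Rightarrow> 'q::comm_ring_1) \<Rightarrow>
    'q \<Rightarrow> (('v \<Rightarrow> 'v) \<Rightarrow> 'v list) \<Rightarrow> ('v \<Rightarrow> 'v) \<Rightarrow> ('v \<Rightarrow> 'v) \<Rightarrow> (('v \<Rightarrow> 'v) \<Rightarrow> 'q)" where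
  "zeta W act x c I v w = hecke W act (Y_word W act x (rev (I w))) (pt W act c v)"

definition pi_elt :: "('v \<Rightarrow> 'v) set \<Rightarrow> (('v \<Rightarrow> 'v) \<Rightarrow> 'q \<Rightarrow> 'q) \<Rightarrow> 'q::comm_ring_1 \<Rightarrow>
    (('v \<Rightarrow> 'v) \<Rightarrow> 'q)" where
  "pi_elt W act c = (\<lambda>w. if w \<in> W then qinv (act w c) else 0)"

text \<open>zeta^vee_{I_w}: the tuple (phi_w(delta_v))_v for the S-linear functional phi_w on the
  Demazure algebra with Y_{I_u} |-> Kronecker(w,u).  Since delta_v = sum_u a_{v,u} Y_{I_u}
  (unique expansion, the Y_{I_u} being a basis), phi_w(delta_v) = a_{v,w}.\<close>
definition zeta_dual :: "('v::real_inner \<Rightarrow> 'v) set \<Rightarrow> (('v \<Rightarrow> 'v) \<Rightarrow> 'q \<Rightarrow> 'q) \<Rightarrow>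
    ('v \<Rightarrow> 'q::comm_ring_1) \<Rightarrow> (('v \<Rightarrow> 'v) \<Rightarrow> 'v list) \<Rightarrow> ('v \<Rightarrow> 'v) \<Rightarrow> (('v \<Rightarrow> 'v) \<Rightarrow> 'q)" where
  "zeta_dual W act x I w = (\<lambda>v. if v \<in> W then
      (THE a. a \<in> extensional W \<and>
              qw_delta v = (\<lambda>y. \<Sum>u\<in>W. a u * Y_word W act x (I u) y)) w
    else 0)"

definition structure_algebra :: "('v::real_inner \<Rightarrow> 'v) set \<Rightarrow> 'v set \<Rightarrow> 'q::comm_ring_1 set \<Rightarrow>
    ('v \<Rightarrow> 'q) \<Rightarrow> (('v \<Rightarrow> 'v) \<Rightarrow> 'q) set" where
  "structure_algebra W P S x = {z. (\<forall>v. v \<notin> W \<longrightarrow> z v = 0) \<and> (\<forall>v\<in>W. z v \<in> S) \<and>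
      (\<forall>w\<in>W. \<forall>\<alpha>\<in>P. \<exists>s\<in>S. z (refl \<alpha> \<circ> w) - z w = x \<alpha> * s)}"

definition is_S_basis :: "'q::comm_ring_1 set \<Rightarrow> 'w set \<Rightarrow> ('w \<Rightarrow> 'q) set \<Rightarrow>
    ('w \<Rightarrow> ('w \<Rightarrow> 'q)) \<Rightarrow> bool" where
  "is_S_basis S W Z b \<longleftrightarrow> (\<forall>w\<in>W. b w \<in> Z) \<and>
     (\<forall>z\<in>Z. \<exists>!c. c \<in> W \<rightarrow>\<^sub>E S \<and> z = (\<lambda>v. \<Sum>w\<in>W. c w * b w v))"

text \<open>S is a subring of the commutative ring Q (type 'q); Q = S[1/x_alpha | alpha in Phi];
  W acts on Q by ring automorphisms preserving S with w(x_alpha) = x_{w(alpha)};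
  x_alpha regular, x_{-alpha} an associate of x_alpha (as for any formal group law);
  the divisibility hypothesis for distinct positive roots.\<close>
definition demazure_setting :: "'v::euclidean_space set \<Rightarrow> 'v set \<Rightarrow> 'q::comm_ring_1 set \<Rightarrow>
    (('v \<Rightarrow> 'v) \<Rightarrow> 'q \<Rightarrow> 'q) \<Rightarrow> ('v \<Rightarrow> 'q) \<Rightarrow> bool" where
  "demazure_setting \<Phi> \<Delta> S act x \<longleftrightarrow>
     root_system \<Phi> \<and> simple_system \<Phi> \<Delta> \<and>
     0 \<in> S \<and> 1 \<in> S \<and> (\<forall>a\<in>S. \<forall>b\<in>S. a + b \<in> S \<and> a * b \<in> S \<and> - a \<in> S) \<and>
     (\<forall>\<alpha>\<in>\<Phi>. x \<alpha> \<in> S \<and> (\<exists>b. x \<alpha> * b = 1)) \<and>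
     (\<forall>q. \<exists>s\<in>S. \<exists>n::nat. q * (\<Prod>\<alpha>\<in>\<Phi>. x \<alpha>) ^ n = s) \<and>
     (\<forall>\<alpha>\<in>\<Phi>. \<forall>f\<in>S. x \<alpha> * f = 0 \<longrightarrow> f = 0) \<and>
     (\<forall>\<alpha>\<in>\<Phi>. \<exists>u\<in>S. (\<exists>u'\<in>S. u * u' = 1) \<and> x (- \<alpha>) = u * x \<alpha>) \<and>
     (\<forall>w\<in>weyl_group \<Phi>. (\<forall>a b. act w (a + b) = act w a + act w b \<and> act w (a * b) = act w a * act w b)
          \<and> act w 1 = 1 \<and> act w ` S \<subseteq> S \<and> (\<forall>\<alpha>\<in>\<Phi>. act w (x \<alpha>) = x (w \<alpha>))) \<and>
     act id = id \<and>
     (\<forall>w\<in>weyl_group \<Phi>. \<forall>u\<in>weyl_group \<Phi>. act (w \<circ> u) = act w \<circ> act u) \<and>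
     (\<forall>\<alpha>\<in>pos_roots \<Phi> \<Delta>. \<forall>\<alpha>'\<in>pos_roots \<Phi> \<Delta>. \<alpha> \<noteq> \<alpha>' \<longrightarrow>
        (\<forall>f\<in>S. (\<exists>g\<in>S. x \<alpha>' * f = x \<alpha> * g) \<longrightarrow> (\<exists>g\<in>S. f = x \<alpha> * g)))"

end

theory Submission
  imports Defs
begin


lemma refl_word_Cons: "refl_word (a # l) = refl a \<circ> refl_word l"
  by (simp add: refl_word_def)

lemma refl_word_Nil: "refl_word [] = id"
  by (simp add: refl_word_def)

lemma refl_word_append: "refl_word (l1 @ l2) = refl_word l1 \<circ> refl_word l2"
  by (induction l1) (auto simp: refl_word_def)

lemma refl_inner: "refl \<alpha> \<mu> \<bullet> \<alpha> = - (\<mu> \<bullet> \<alpha>)" if "\<alpha> \<noteq> 0"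
  using that by (simp add: refl_def inner_diff_left)

lemma refl_refl: "\<alpha> \<noteq> 0 \<Longrightarrow> refl \<alpha> (refl \<alpha> \<mu>) = \<mu>"
  apply (subst (1) refl_def)
  apply (simp add: refl_inner)
  apply (simp add: refl_def)
  done

lemma refl_linear: "linear (refl \<alpha>)"
  unfolding refl_def
  by (intro linearI) (auto simp: inner_add_left algebra_simps add_divide_distrib scaleR_add_left)

lemma refl_inner_pres: "\<alpha> \<noteq> 0 \<Longrightarrow> refl \<alpha> \<mu> \<bullet> refl \<alpha> \<nu> = \<mu> \<bullet> \<nu>"
  by (simp add: refl_def inner_diff_left inner_diff_right algebra_simps inner_commute)

lemma refl_word_linear: "linear (refl_word l)"
proof (induction l)
  case Nil show ?case by (simp add: refl_word_Nil bounded_linear.linear[OF bounded_linear_ident])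
next
  case (Cons a l) then show ?case
    by (simp only: refl_word_Cons) (rule linear_compose[OF _ refl_linear])
qed

lemma refl_word_inner: "0 \<notin> set l \<Longrightarrow> refl_word l \<mu> \<bullet> refl_word l \<nu> = \<mu> \<bullet> \<nu>"
  by (induction l) (auto simp: refl_word_Cons refl_word_Nil refl_inner_pres)

lemma refl_word_rev: "0 \<notin> set l \<Longrightarrow> refl_word (rev l) \<circ> refl_word l = id"
proof (induction l)
  case Nil then show ?case by (simp add: refl_word_Nil)
next
  case (Cons a l)
  have "refl_word (rev (a # l)) \<circ> refl_word (a # l) = refl_word (rev l) \<circ> (refl a \<circ> refl a) \<circ> refl_word l"
    by (simp add: refl_word_append refl_word_Cons refl_word_Nil o_assoc)
  also have "refl a \<circ> refl a = id" using Cons.prems by (auto simp: refl_refl)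
  finally show ?case using Cons by simp
qed

lemma refl_word_image: "(\<forall>\<alpha>\<in>set l. refl \<alpha> ` P = P) \<Longrightarrow> refl_word l ` P = P"
proof (induction l)
  case Nil then show ?case by (simp add: refl_word_Nil)
next
  case (Cons a l)
  have "refl_word (a # l) ` P = refl a ` (refl_word l ` P)" by (simp add: refl_word_Cons image_comp)
  then show ?case using Cons by simp
qed

lemma ex1_uniq: "\<exists>!c. P c \<Longrightarrow> P a \<Longrightarrow> P b \<Longrightarrow> a = b"
  by blast

locale ds =
  fixes \<Phi> \<Delta> :: "'v::euclidean_space set"
    and S :: "'q::comm_ring_1 set"
    and act :: "('v \<Rightarrow> 'v) \<Rightarrow> 'q \<Rightarrow> 'q"
    and x :: "'v \<Rightarrow> 'q"
  assumes setting: "demazure_setting \<Phi> \<Delta> S act x"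
begin

abbreviation "W \<equiv> weyl_group \<Phi>"

lemma rs: "root_system \<Phi>" and ss: "simple_system \<Phi> \<Delta>"
  using setting by (auto simp: demazure_setting_def)

lemma zero_notin: "0 \<notin> \<Phi>" using rs by (simp add: root_system_def)

lemma W_iff: "v \<in> W \<longleftrightarrow> (\<exists>l. set l \<subseteq> \<Phi> \<and> v = refl_word l)"
  by (auto simp: weyl_group_def)

lemma id_W: "id \<in> W"
  unfolding W_iff by (rule exI[of _ "[]"]) (simp add: refl_word_Nil)

lemma comp_W: "v \<in> W \<Longrightarrow> u \<in> W \<Longrightarrow> v \<circ> u \<in> W"
  unfolding W_iff by (metis Un_least refl_word_append set_append)

lemma W_inv_props: assumes "v \<in> W" shows "inv v \<in> W" "inv v \<circ> v = id" "v \<circ> inv v = id"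
proof -
  obtain l where l: "set l \<subseteq> \<Phi>" "v = refl_word l" using assms W_iff by auto
  have nz: "0 \<notin> set l" "0 \<notin> set (rev l)" using l zero_notin by auto
  have a: "refl_word (rev l) \<circ> v = id" using refl_word_rev[OF nz(1)] l by simp
  have b: "v \<circ> refl_word (rev l) = id" using refl_word_rev[OF nz(2)] l by simp
  have "inv v = refl_word (rev l)" using a b by (metis inv_unique_comp)
  moreover have "set (rev l) \<subseteq> \<Phi>" using l by simp
  ultimately show "inv v \<in> W" "inv v \<circ> v = id" "v \<circ> inv v = id" using a b unfolding W_iff by (auto intro!: exI[of _ "rev l"])
qed

lemma W_linear: "v \<in> W \<Longrightarrow> linear v"
  using W_iff refl_word_linear by auto

lemma W_inner: "v \<in> W \<Longrightarrow> v \<mu> \<bullet> v \<nu> = \<mu> \<bullet> \<nu>"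
proof -
  assume "v \<in> W"
  then obtain l where l: "set l \<subseteq> \<Phi>" "v = refl_word l" using W_iff by auto
  then have "0 \<notin> set l" using zero_notin by auto
  then show ?thesis using l refl_word_inner by simp
qed

lemma W_Phi: "v \<in> W \<Longrightarrow> v ` \<Phi> = \<Phi>"
proof -
  assume "v \<in> W"
  then obtain l where l: "set l \<subseteq> \<Phi>" "v = refl_word l" using W_iff by auto
  have "\<forall>\<alpha>\<in>set l. refl \<alpha> ` \<Phi> = \<Phi>" using l rs unfolding root_system_def by (meson subsetD)
  then show ?thesis using l refl_word_image by blast
qed

lemma finite_W: "finite W"
proof -
  have fin: "finite \<Phi>" using rs by (simp add: root_system_def)
  have "inj_on (\<lambda>v. restrict v \<Phi>) W"
  proof (rule inj_onI)
    fix v u assume v: "v \<in> W" and u: "u \<in> W" and eq: "restrict v \<Phi> = restrict u \<Phi>"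
    have "\<And>b. b \<in> \<Phi> \<Longrightarrow> v b = u b" using eq by (metis restrict_apply')
    then have "\<And>y. y \<in> span \<Phi> \<Longrightarrow> v y = u y"
      using linear_eq_on_span[OF W_linear[OF v] W_linear[OF u]] by blast
    then show "v = u" using rs by (auto simp: root_system_def)
  qed
  moreover have "(\<lambda>v. restrict v \<Phi>) ` W \<subseteq> \<Phi> \<rightarrow>\<^sub>E \<Phi>"
  proof
    fix f assume "f \<in> (\<lambda>v. restrict v \<Phi>) ` W"
    then obtain v where v: "v \<in> W" "f = restrict v \<Phi>" by blast
    have "\<And>y. y \<in> \<Phi> \<Longrightarrow> v y \<in> \<Phi>" using W_Phi[OF v(1)] by (metis imageI)
    then show "f \<in> \<Phi> \<rightarrow>\<^sub>E \<Phi>" using v(2) by auto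
  qed
  moreover have "finite (\<Phi> \<rightarrow>\<^sub>E \<Phi>)" using fin by (simp add: finite_PiE)
  ultimately show ?thesis by (metis finite_imageD finite_subset)
qed

lemma act_add: "v \<in> W \<Longrightarrow> act v (a + b) = act v a + act v b"
  and act_mult: "v \<in> W \<Longrightarrow> act v (a * b) = act v a * act v b"
  and act_one: "v \<in> W \<Longrightarrow> act v 1 = 1"
  and act_S: "v \<in> W \<Longrightarrow> a \<in> S \<Longrightarrow> act v a \<in> S"
  and act_x: "v \<in> W \<Longrightarrow> \<alpha> \<in> \<Phi> \<Longrightarrow> act v (x \<alpha>) = x (v \<alpha>)"
  using setting unfolding demazure_setting_def by blast+

lemma act_id: "act id = id"
  using setting unfolding demazure_setting_def by blast

lemma act_comp: "v \<in> W \<Longrightarrow> u \<in> W \<Longrightarrow> act (v \<circ> u) a = act v (act u a)"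
  using setting unfolding demazure_setting_def by (metis comp_apply)

lemma act_zero: "v \<in> W \<Longrightarrow> act v 0 = 0"
  using act_add[of v 0 0] by simp

lemma act_sum: "v \<in> W \<Longrightarrow> act v (\<Sum>i\<in>A. f i) = (\<Sum>i\<in>A. act v (f i))"
  by (induction A rule: infinite_finite_induct) (auto simp: act_zero act_add)

lemma act_uminus: "v \<in> W \<Longrightarrow> act v (- a) = - act v a"
  using act_add[of v a "-a"] act_zero[of v] by (simp add: eq_neg_iff_add_eq_0 add.commute)

lemma act_diff: "v \<in> W \<Longrightarrow> act v (a - b) = act v a - act v b"
  using act_add[of v a "-b"] act_uminus[of v b] by simp

definition D :: "('v \<Rightarrow> 'v) \<Rightarrow> (('v \<Rightarrow> 'v) \<Rightarrow> 'q) \<Rightarrow> (('v \<Rightarrow> 'v) \<Rightarrow> 'q)" where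
  "D v z = weyl_act W act (qw_delta v) z"

lemma D_eval: assumes v: "v \<in> W"
  shows "D v z = (\<lambda>v'. if v' \<in> W then act v (z (inv v \<circ> v')) else 0)"
proof
  fix v'
  show "D v z v' = (if v' \<in> W then act v (z (inv v \<circ> v')) else 0)"
  proof (cases "v' \<in> W")
    case False then show ?thesis by (simp add: D_def weyl_act_def)
  next
    case True
    have 1: "(\<Sum>u\<in>W. if w \<circ> u = v' then qw_delta v w * act w (z u) else 0)
       = (if w = v then (\<Sum>u\<in>W. if v \<circ> u = v' then act v (z u) else 0) else 0)" for w
      by (auto simp: qw_delta_def intro!: sum.neutral sum.cong)
    have 2: "(v \<circ> u = v') \<longleftrightarrow> (u = inv v \<circ> v')" for u
      using W_inv_props[OF v] by (metis comp_id fun.map_comp id_comp)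
    have "D v z v' = (\<Sum>w\<in>W. if w = v then (\<Sum>u\<in>W. if v \<circ> u = v' then act v (z u) else 0) else 0)"
      using True by (simp add: D_def weyl_act_def 1)
    also have "\<dots> = (\<Sum>u\<in>W. if v \<circ> u = v' then act v (z u) else 0)"
      using v finite_W by (simp add: sum.delta)
    also have "\<dots> = (\<Sum>u\<in>W. if u = inv v \<circ> v' then act v (z (inv v \<circ> v')) else 0)"
      by (rule sum.cong) (auto simp: 2)
    also have "\<dots> = act v (z (inv v \<circ> v'))"
      using finite_W comp_W[OF W_inv_props(1)[OF v] True] by (simp add: sum.delta)
    finally show ?thesis using True by simp
  qed
qed

lemma inv_comp_W: "v \<in> W \<Longrightarrow> u \<in> W \<Longrightarrow> inv (v \<circ> u) = inv u \<circ> inv v"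
proof -
  assume v: "v \<in> W" and u: "u \<in> W"
  have "(inv u \<circ> inv v) \<circ> (v \<circ> u) = id"
    using W_inv_props[OF v] W_inv_props[OF u] by (metis comp_id fun.map_comp)
  moreover have "(v \<circ> u) \<circ> (inv u \<circ> inv v) = id"
    using W_inv_props[OF v] W_inv_props[OF u] by (metis comp_id fun.map_comp)
  ultimately show ?thesis by (metis inv_unique_comp)
qed

lemma D_comp: assumes v: "v \<in> W" and u: "u \<in> W" shows "D v (D u z) = D (v \<circ> u) z"
proof -
  have vu: "v \<circ> u \<in> W" using comp_W[OF v u] .
  show ?thesis
  proof
    fix v'
    show "D v (D u z) v' = D (v \<circ> u) z v'"
    proof (cases "v' \<in> W")
      case True
      have i: "inv v \<circ> v' \<in> W" using comp_W[OF W_inv_props(1)[OF v] True] .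
      show ?thesis using True i
        by (simp add: D_eval[OF v] D_eval[OF u] D_eval[OF vu] inv_comp_W[OF v u] act_comp[OF v u] o_assoc)
    qed (simp add: D_eval[OF v] D_eval[OF vu])
  qed
qed

lemma D_id: assumes "\<forall>v. v \<notin> W \<longrightarrow> z v = 0" shows "D id z = z"
  using assms by (auto simp: D_eval[OF id_W] act_id inv_id)

lemma D_hecke: assumes v: "v \<in> W" shows "hecke W act a (D v z) = D v (hecke W act a z)"
proof
  fix v'
  show "hecke W act a (D v z) v' = D v (hecke W act a z) v'"
  proof (cases "v' \<in> W")
    case True
    have i: "inv v \<circ> v' \<in> W" using comp_W[OF W_inv_props(1)[OF v] True] .
    have e: "v \<circ> (inv v \<circ> v') = v'" using W_inv_props(3)[OF v] by (simp add: o_assoc)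
    have "hecke W act a (D v z) v' = (\<Sum>w\<in>W. act v' (a w) * act v (z (inv v \<circ> v' \<circ> w)))"
      using True by (auto simp: hecke_def D_eval[OF v] comp_W o_assoc intro!: sum.cong)
    also have "\<dots> = (\<Sum>w\<in>W. act v (act (inv v \<circ> v') (a w)) * act v (z (inv v \<circ> v' \<circ> w)))"
      using act_comp[OF v i] e by (metis)
    also have "\<dots> = D v (hecke W act a z) v'"
      using True i by (simp add: hecke_def D_eval[OF v] act_sum[OF v] act_mult[OF v])
    finally show ?thesis .
  qed (simp add: hecke_def D_eval[OF v])
qed

lemma D_cw: assumes v: "v \<in> W" shows "D v (cw_mult z z') = cw_mult (D v z) (D v z')"
  by (auto simp: D_eval[OF v] cw_mult_def act_mult[OF v])

lemma D_one: assumes v: "v \<in> W" shows "D v (one_tuple W) = one_tuple W"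
  using comp_W[OF W_inv_props(1)[OF v]] by (auto simp: D_eval[OF v] one_tuple_def act_one[OF v])

lemma D_zero: assumes v: "v \<in> W" shows "D v (\<lambda>_. 0) = (\<lambda>_. 0)"
  by (auto simp: D_eval[OF v] act_zero[OF v])

lemma zeta_D: assumes v: "v \<in> W"
  shows "zeta W act x c I v w = D v (zeta W act x c I id w)"
proof -
  have "pt W act c v = D v (pt W act c id)"
    unfolding pt_def D_def[symmetric] using D_comp[OF v id_W] by simp
  then show ?thesis unfolding zeta_def using D_hecke[OF v] by simp
qed

lemma part1:
  assumes v: "v \<in> W"
    and dual: "hecke W act p (cw_mult (zeta W act x c I id w) zd)
        = (if w = u then one_tuple W else (\<lambda>_. 0))"
  shows "hecke W act p (cw_mult (zeta W act x c I v w) (weyl_act W act (qw_delta v) zd))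
        = (if w = u then one_tuple W else (\<lambda>_. 0))"
proof -
  have "hecke W act p (cw_mult (zeta W act x c I v w) (weyl_act W act (qw_delta v) zd))
      = D v (hecke W act p (cw_mult (zeta W act x c I id w) zd))"
    unfolding D_def[symmetric] zeta_D[OF v] D_cw[OF v, symmetric] D_hecke[OF v] ..
  then show ?thesis using dual D_one[OF v] D_zero[OF v] by simp
qed

lemma S_closed_all: "\<forall>a\<in>S. \<forall>b\<in>S. a + b \<in> S \<and> a * b \<in> S \<and> - a \<in> S"
  using setting unfolding demazure_setting_def by (elim conjE) assumption

lemma S_closed: "a \<in> S \<Longrightarrow> b \<in> S \<Longrightarrow> a + b \<in> S \<and> a * b \<in> S \<and> - a \<in> S"
  using S_closed_all by simp

lemma x_neg_all: "\<forall>\<alpha>\<in>\<Phi>. \<exists>u\<in>S. (\<exists>u'\<in>S. u * u' = 1) \<and> x (- \<alpha>) = u * x \<alpha>"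
  using setting unfolding demazure_setting_def by (elim conjE) assumption

lemma x_neg: "\<alpha> \<in> \<Phi> \<Longrightarrow> \<exists>u\<in>S. x (- \<alpha>) = u * x \<alpha>"
  using x_neg_all by blast

lemma pos_sub: "pos_roots \<Phi> \<Delta> \<subseteq> \<Phi>"
  by (auto simp: pos_roots_def)

lemma pos_or_neg: assumes b: "\<beta> \<in> \<Phi>" shows "\<beta> \<in> pos_roots \<Phi> \<Delta> \<or> - \<beta> \<in> pos_roots \<Phi> \<Delta>"
proof -
  have "\<forall>\<alpha>\<in>\<Phi>. \<exists>c. \<alpha> = (\<Sum>\<beta>\<in>\<Delta>. c \<beta> *\<^sub>R \<beta>) \<and>
                 ((\<forall>\<beta>\<in>\<Delta>. 0 \<le> c \<beta>) \<or> (\<forall>\<beta>\<in>\<Delta>. c \<beta> \<le> 0))"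
    using ss unfolding simple_system_def by (elim conjE)
  then obtain c where c: "\<beta> = (\<Sum>\<gamma>\<in>\<Delta>. c \<gamma> *\<^sub>R \<gamma>)" "(\<forall>\<gamma>\<in>\<Delta>. 0 \<le> c \<gamma>) \<or> (\<forall>\<gamma>\<in>\<Delta>. c \<gamma> \<le> 0)"
    using b by (elim ballE exE conjE) auto
  show ?thesis
  proof (cases "\<forall>\<gamma>\<in>\<Delta>. 0 \<le> c \<gamma>")
    case True
    have "\<beta> \<in> pos_roots \<Phi> \<Delta>" unfolding pos_roots_def
      by (rule CollectI, rule conjI[OF b], rule exI[of _ c], rule conjI[OF c(1) True])
    then show ?thesis by (rule disjI1)
  next
    case False
    then have "\<forall>\<gamma>\<in>\<Delta>. c \<gamma> \<le> 0" using c(2) by (elim disjE) simp_all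
    then have neg: "\<forall>\<gamma>\<in>\<Delta>. 0 \<le> - c \<gamma>" by simp
    have "\<forall>\<alpha>\<in>\<Phi>. \<forall>c::real. c *\<^sub>R \<alpha> \<in> \<Phi> \<longleftrightarrow> c = 1 \<or> c = -1"
      using rs unfolding root_system_def by (elim conjE)
    then have "(-1) *\<^sub>R \<beta> \<in> \<Phi>" using bspec[OF _ b] by blast
    then have m: "- \<beta> \<in> \<Phi>" by simp
    have eq: "- \<beta> = (\<Sum>\<gamma>\<in>\<Delta>. (- c \<gamma>) *\<^sub>R \<gamma>)" using c(1) by (simp add: sum_negf)
    have "- \<beta> \<in> pos_roots \<Phi> \<Delta>" unfolding pos_roots_def
      by (rule CollectI, rule conjI[OF m], rule exI[of _ "\<lambda>\<gamma>. - c \<gamma>"], rule conjI[OF eq neg])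
    then show ?thesis by (rule disjI2)
  qed
qed

lemma refl_neg: "refl (- \<beta>) = refl \<beta>"
  by (simp add: refl_def fun_eq_iff)

lemma refl_W: "\<alpha> \<in> \<Phi> \<Longrightarrow> refl \<alpha> \<in> W"
  unfolding W_iff by (rule exI[of _ "[\<alpha>]"]) (simp add: refl_word_Cons refl_word_Nil)

lemma conj_refl: assumes v: "v \<in> W" shows "v \<circ> refl \<beta> = refl (v \<beta>) \<circ> v"
proof
  fix \<mu>
  have l: "linear v" using W_linear[OF v] .
  have "v (refl \<beta> \<mu>) = v \<mu> - (2 * (\<mu> \<bullet> \<beta>) / (\<beta> \<bullet> \<beta>)) *\<^sub>R v \<beta>"
    unfolding refl_def using l by (simp add: linear_diff linear_scale)
  also have "\<dots> = refl (v \<beta>) (v \<mu>)" unfolding refl_def by (simp add: W_inner[OF v])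
  finally show "(v \<circ> refl \<beta>) \<mu> = (refl (v \<beta>) \<circ> v) \<mu>" by simp
qed

abbreviation "Z \<equiv> structure_algebra W (pos_roots \<Phi> \<Delta>) S x"

lemma D_Z: assumes v: "v \<in> W" and z: "z \<in> Z" shows "D v z \<in> Z"
proof -
  have vi: "inv v \<in> W" using W_inv_props[OF v] by simp
  have z0: "\<forall>v'. v' \<notin> W \<longrightarrow> z v' = 0" and zS: "\<forall>v'\<in>W. z v' \<in> S"
    and zd: "\<forall>w\<in>W. \<forall>\<alpha>\<in>pos_roots \<Phi> \<Delta>. \<exists>s\<in>S. z (refl \<alpha> \<circ> w) - z w = x \<alpha> * s"
    using z by (auto simp: structure_algebra_def)
  have A: "\<forall>v'\<in>W. D v z v' \<in> S"
    using zS comp_W[OF vi] act_S[OF v] by (simp add: D_eval[OF v])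
  have B: "\<exists>s\<in>S. D v z (refl \<alpha> \<circ> w) - D v z w = x \<alpha> * s"
    if w: "w \<in> W" and a: "\<alpha> \<in> pos_roots \<Phi> \<Delta>" for w \<alpha>
  proof -
    have aP: "\<alpha> \<in> \<Phi>" using a pos_sub by blast
    have rw: "refl \<alpha> \<circ> w \<in> W" using comp_W[OF refl_W[OF aP] w] .
    define \<beta> where "\<beta> = inv v \<alpha>"
    have bP: "\<beta> \<in> \<Phi>" using W_Phi[OF vi] aP unfolding \<beta>_def by blast
    have vb: "v \<beta> = \<alpha>" unfolding \<beta>_def using fun_cong[OF W_inv_props(3)[OF v], of \<alpha>] by simp
    define w' where "w' = inv v \<circ> w"
    have w'W: "w' \<in> W" unfolding w'_def using comp_W[OF vi w] .
    have "inv v \<circ> (refl \<alpha> \<circ> w) = (inv v \<circ> refl \<alpha>) \<circ> w" by (simp only: o_assoc)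
    also have "\<dots> = (refl \<beta> \<circ> inv v) \<circ> w" unfolding \<beta>_def by (simp only: conj_refl[OF vi])
    also have "\<dots> = refl \<beta> \<circ> w'" unfolding w'_def by (simp only: o_assoc)
    finally have cj: "inv v \<circ> (refl \<alpha> \<circ> w) = refl \<beta> \<circ> w'" .
    have e1: "D v z (refl \<alpha> \<circ> w) = act v (z (refl \<beta> \<circ> w'))"
      using rw by (simp only: D_eval[OF v] cj if_True)
    have e2: "D v z w = act v (z w')"
      using w by (simp only: D_eval[OF v] w'_def if_True)
    have diff: "D v z (refl \<alpha> \<circ> w) - D v z w = act v (z (refl \<beta> \<circ> w') - z w')"
      by (simp only: e1 e2 act_diff[OF v])
    from pos_or_neg[OF bP] show ?thesis
    proof
      assume bp: "\<beta> \<in> pos_roots \<Phi> \<Delta>"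
      then obtain s where s: "s \<in> S" "z (refl \<beta> \<circ> w') - z w' = x \<beta> * s" using zd w'W by blast
      have "act v (x \<beta> * s) = x \<alpha> * act v s" using act_mult[OF v] act_x[OF v bP] vb by simp
      then show ?thesis using diff s act_S[OF v s(1)] by auto
    next
      assume bp: "- \<beta> \<in> pos_roots \<Phi> \<Delta>"
      obtain s where s0: "s \<in> S" "z (refl (- \<beta>) \<circ> w') - z w' = x (- \<beta>) * s"
        using zd w'W bp by blast
      have s: "s \<in> S" "z (refl \<beta> \<circ> w') - z w' = x (- \<beta>) * s"
        using s0 by (simp_all only: refl_neg)
      have mbP: "- \<beta> \<in> \<Phi>" using bp pos_sub by blast
      have vmb: "v (- \<beta>) = - \<alpha>" using linear_neg[OF W_linear[OF v]] vb by simp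
      obtain u where u: "u \<in> S" "x (- \<alpha>) = u * x \<alpha>" using x_neg[OF aP] by blast
      have "act v (x (- \<beta>) * s) = x \<alpha> * (u * act v s)"
        using act_mult[OF v] act_x[OF v mbP] vmb u by (simp add: mult_ac)
      moreover have "u * act v s \<in> S" using S_closed[OF u(1) act_S[OF v s(1)]] by blast
      ultimately show ?thesis using diff s by auto
    qed
  qed
  have C: "\<forall>v'. v' \<notin> W \<longrightarrow> D v z v' = 0" by (simp add: D_eval[OF v])
  show ?thesis unfolding structure_algebra_def using A B C by blast
qed

lemma D_lincomb: assumes v: "v \<in> W"
  shows "D v (\<lambda>v'. \<Sum>w\<in>W. c w * b w v') = (\<lambda>v'. \<Sum>w\<in>W. act v (c w) * D v (b w) v')"
  by (auto simp: D_eval[OF v] act_sum[OF v] act_mult[OF v])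

lemma Z_zero: "z \<in> Z \<Longrightarrow> v \<notin> W \<Longrightarrow> z v = 0"
  by (simp add: structure_algebra_def)

lemma D_inv_D: assumes v: "v \<in> W" and z: "z \<in> Z"
  shows "D v (D (inv v) z) = z" "D (inv v) (D v z) = z"
  using D_comp[OF v W_inv_props(1)[OF v]] D_comp[OF W_inv_props(1)[OF v] v] W_inv_props[OF v]
    D_id[of z] z Z_zero by auto

lemma act_inv: assumes v: "v \<in> W" shows "act v (act (inv v) a) = a" "act (inv v) (act v a) = a"
  using act_comp[OF v W_inv_props(1)[OF v]] act_comp[OF W_inv_props(1)[OF v] v] W_inv_props[OF v]
  by (auto simp: act_id)

lemma part2: assumes v: "v \<in> W" and B: "is_S_basis S W Z b"
  shows "is_S_basis S W Z (\<lambda>w. D v (b w))"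
proof -
  have vi: "inv v \<in> W" using W_inv_props[OF v] by simp
  have bZ: "\<forall>w\<in>W. b w \<in> Z" using B by (simp add: is_S_basis_def)
  have uq: "\<forall>z\<in>Z. \<exists>!c. c \<in> W \<rightarrow>\<^sub>E S \<and> z = (\<lambda>v. \<Sum>w\<in>W. c w * b w v)"
    using B by (simp add: is_S_basis_def)
  have 1: "\<forall>w\<in>W. D v (b w) \<in> Z" using bZ D_Z[OF v] by blast
  have 2: "\<exists>!c. c \<in> W \<rightarrow>\<^sub>E S \<and> z = (\<lambda>v'. \<Sum>w\<in>W. c w * D v (b w) v')" if z: "z \<in> Z" for z
  proof (rule ex_ex1I)
    have z': "D (inv v) z \<in> Z" using D_Z[OF vi z] .
    then obtain c' where c': "c' \<in> W \<rightarrow>\<^sub>E S" "D (inv v) z = (\<lambda>v. \<Sum>w\<in>W. c' w * b w v)"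
      using uq by blast
    define c where "c = restrict (\<lambda>w. act v (c' w)) W"
    have cS: "c \<in> W \<rightarrow>\<^sub>E S" using c' act_S[OF v] unfolding c_def by auto
    have "z = D v (D (inv v) z)" using D_inv_D[OF v z] by simp
    also have "\<dots> = (\<lambda>v'. \<Sum>w\<in>W. act v (c' w) * D v (b w) v')" using c'(2) D_lincomb[OF v] by simp
    also have "\<dots> = (\<lambda>v'. \<Sum>w\<in>W. c w * D v (b w) v')" unfolding c_def by (auto intro!: sum.cong)
    finally show "\<exists>c. c \<in> W \<rightarrow>\<^sub>E S \<and> z = (\<lambda>v'. \<Sum>w\<in>W. c w * D v (b w) v')" using cS by blast
  next
    fix c1 c2
    assume h1: "c1 \<in> W \<rightarrow>\<^sub>E S \<and> z = (\<lambda>v'. \<Sum>w\<in>W. c1 w * D v (b w) v')"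
      and h2: "c2 \<in> W \<rightarrow>\<^sub>E S \<and> z = (\<lambda>v'. \<Sum>w\<in>W. c2 w * D v (b w) v')"
    define d1 where "d1 = restrict (\<lambda>w. act (inv v) (c1 w)) W"
    define d2 where "d2 = restrict (\<lambda>w. act (inv v) (c2 w)) W"
    have dS: "d1 \<in> W \<rightarrow>\<^sub>E S" "d2 \<in> W \<rightarrow>\<^sub>E S"
      using h1 h2 act_S[OF vi] unfolding d1_def d2_def by auto
    have e: "D (inv v) z = (\<lambda>v'. \<Sum>w\<in>W. d w * b w v')"
      if h: "z = (\<lambda>v'. \<Sum>w\<in>W. c w * D v (b w) v')" and d: "d = restrict (\<lambda>w. act (inv v) (c w)) W" for c d
    proof -
      have "D (inv v) z = (\<lambda>v'. \<Sum>w\<in>W. act (inv v) (c w) * D (inv v) (D v (b w)) v')"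
        using h D_lincomb[OF vi] by simp
      also have "\<dots> = (\<lambda>v'. \<Sum>w\<in>W. d w * b w v')"
        using D_inv_D(2)[OF v] bZ unfolding d by (auto intro!: sum.cong)
      finally show ?thesis .
    qed
    have "d1 = d2"
      by (rule ex1_uniq[OF uq[rule_format, OF D_Z[OF vi z]]])
        (use e[OF conjunct2[OF h1] d1_def] e[OF conjunct2[OF h2] d2_def] dS in simp_all)
    then have "\<And>w. w \<in> W \<Longrightarrow> c1 w = c2 w"
      unfolding d1_def d2_def by (metis act_inv(1)[OF v] restrict_apply')
    moreover have "c1 \<in> extensional W" "c2 \<in> extensional W" using h1 h2 by (simp_all add: PiE_iff)
    ultimately show "c1 = c2" by (intro extensionalityI[of c1 W c2]) auto
  qed
  show ?thesis unfolding is_S_basis_def using 1 2 by blast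
qed

end


theorem lemma3p6:
  fixes \<Phi> \<Delta> :: "'v::euclidean_space set"
    and S :: "'q::comm_ring_1 set"
    and act :: "('v \<Rightarrow> 'v) \<Rightarrow> 'q \<Rightarrow> 'q"
    and x :: "'v \<Rightarrow> 'q"
    and I :: "('v \<Rightarrow> 'v) \<Rightarrow> 'v list"
  assumes setting: "demazure_setting \<Phi> \<Delta> S act x"
    and reduced: "\<forall>w\<in>weyl_group \<Phi>. reduced_word \<Delta> w (I w)"
    and known_basis: "is_S_basis S (weyl_group \<Phi>)
                        (structure_algebra (weyl_group \<Phi>) (pos_roots \<Phi> \<Delta>) S x)
                        (zeta_dual (weyl_group \<Phi>) act x I)"
    and known_dual: "\<forall>w\<in>weyl_group \<Phi>. \<forall>u\<in>weyl_group \<Phi>.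
        hecke (weyl_group \<Phi>) act (pi_elt (weyl_group \<Phi>) act (xPi \<Phi> \<Delta> x))
          (cw_mult (zeta (weyl_group \<Phi>) act x (xPi \<Phi> \<Delta> x) I id w)
                   (zeta_dual (weyl_group \<Phi>) act x I u))
        = (if w = u then one_tuple (weyl_group \<Phi>) else (\<lambda>_. 0))"
  shows "(\<forall>v\<in>weyl_group \<Phi>. \<forall>w\<in>weyl_group \<Phi>. \<forall>u\<in>weyl_group \<Phi>.
            hecke (weyl_group \<Phi>) act (pi_elt (weyl_group \<Phi>) act (xPi \<Phi> \<Delta> x))
              (cw_mult (zeta (weyl_group \<Phi>) act x (xPi \<Phi> \<Delta> x) I v w)
                       (weyl_act (weyl_group \<Phi>) act (qw_delta v) (zeta_dual (weyl_group \<Phi>) act x I u)))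
            = (if w = u then one_tuple (weyl_group \<Phi>) else (\<lambda>_. 0)))
       \<and> (\<forall>v\<in>weyl_group \<Phi>.
            is_S_basis S (weyl_group \<Phi>)
              (structure_algebra (weyl_group \<Phi>) (pos_roots \<Phi> \<Delta>) S x)
              (\<lambda>w. weyl_act (weyl_group \<Phi>) act (qw_delta v) (zeta_dual (weyl_group \<Phi>) act x I w)))"
proof -
  interpret d: ds \<Phi> \<Delta> S act x by (rule ds.intro) (rule setting)
  have P1: "\<forall>v\<in>weyl_group \<Phi>. \<forall>w\<in>weyl_group \<Phi>. \<forall>u\<in>weyl_group \<Phi>.
            hecke (weyl_group \<Phi>) act (pi_elt (weyl_group \<Phi>) act (xPi \<Phi> \<Delta> x))
              (cw_mult (zeta (weyl_group \<Phi>) act x (xPi \<Phi> \<Delta> x) I v w)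
                       (weyl_act (weyl_group \<Phi>) act (qw_delta v) (zeta_dual (weyl_group \<Phi>) act x I u)))
            = (if w = u then one_tuple (weyl_group \<Phi>) else (\<lambda>_. 0))"
  proof (intro ballI)
    fix v w u assume v: "v \<in> weyl_group \<Phi>" and w: "w \<in> weyl_group \<Phi>" and u: "u \<in> weyl_group \<Phi>"
    show "hecke (weyl_group \<Phi>) act (pi_elt (weyl_group \<Phi>) act (xPi \<Phi> \<Delta> x))
              (cw_mult (zeta (weyl_group \<Phi>) act x (xPi \<Phi> \<Delta> x) I v w)
                       (weyl_act (weyl_group \<Phi>) act (qw_delta v) (zeta_dual (weyl_group \<Phi>) act x I u)))
            = (if w = u then one_tuple (weyl_group \<Phi>) else (\<lambda>_. 0))"
      by (rule d.part1[OF v known_dual[rule_format, OF w u]])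
  qed
  have P2: "\<forall>v\<in>weyl_group \<Phi>.
            is_S_basis S (weyl_group \<Phi>)
              (structure_algebra (weyl_group \<Phi>) (pos_roots \<Phi> \<Delta>) S x)
              (\<lambda>w. weyl_act (weyl_group \<Phi>) act (qw_delta v) (zeta_dual (weyl_group \<Phi>) act x I w))"
  proof
    fix v assume v: "v \<in> weyl_group \<Phi>"
    show "is_S_basis S (weyl_group \<Phi>)
              (structure_algebra (weyl_group \<Phi>) (pos_roots \<Phi> \<Delta>) S x)
              (\<lambda>w. weyl_act (weyl_group \<Phi>) act (qw_delta v) (zeta_dual (weyl_group \<Phi>) act x I w))"
      using d.part2[OF v known_basis] unfolding d.D_def .
  qed
  show ?thesis using P1 P2 by (rule conjI)
qed

end
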